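(* Let $[t_0,t_1]$ be an admissible segment of $\mathbf r$ with associated tetrahedron $\mathbf r_0\mathbf r_1\mathbf r_2\mathbf r_3$. For any $t^\star\in(t_0,t_1)$ let $\mathbf r_0\mathbf r_1^\star\mathbf r_2^\star\mathbf r_3^\star$ be the associated tetrahedron of the sub-segment $[t_0,t^\star]$. Then (a) $\mathbf r_1^\star$ and $\mathbf r_1$ lie on the same side of $\mathbf r_0$ on the tangent line $T^+(t_0)$; (b) $\mathbf r_2^\star$ and $\mathbf r_2$ lie on the same side of the line $T^+(t_0)$ within the osculating plane $O^+(t_0)$.
   Context: Setting: $\mathbf r(t)=(x(t),y(t),z(t))$ with $x,y,z$ rational functions with real coefficients whose denominators do not vanish on the parameter interval, properly parametrized, and not contained in a plane. Curvature $\kappa=\|\mathbf r'\times\mathbf r''\|/\|\mathbf r'\|^3$; torsion $\tau$ vanishes exactly where $\det(\mathbf r',\mathbf r'',\mathbf r''')=0$. Unit tangent $\boldsymbol\alpha=\mathbf r'/\|\mathbf r'\|$, unit binormal $\boldsymbol\gamma=\mathbf r'\times\mathbf r''/\|\mathbf r'\times\mathbf r''\|$; one-sided limits $\boldsymbol\alpha^{\pm}(s)=\lim_{t\to s^\pm}\boldsymbol\alpha(t)$, $\boldsymbol\gamma^{\pm}(s)=\lim_{t\to s^\pm}\boldsymbol\gamma(t)$; tangent lines $T^{\pm}(s)=\{\mathbf r(s)+\lambda\boldsymbol\alpha^{\pm}(s)\}$, osculating planes $O^{\pm}(s)=\{X:(X-\mathbf r(s))\cdot\boldsymbol\gamma^{\pm}(s)=0\}$.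 A point is singular if it corresponds to more than one parameter counted with multiplicity; character points are singular points, inflections ($\kappa=0$) and torsion-vanishing points ($\tau=0$). Associated tetrahedron of $[a,b]$: vertices $\mathbf r(a)$, $T^+(a)\cap L$, $T^-(b)\cap L$, $\mathbf r(b)$ where $L=O^+(a)\cap O^-(b)$. Admissible segment: $t_0<t_1$, no parameter in $(t_0,t_1]$ gives a character point, and for all $t_0\le s_1<s_2\le t_1$: (I) $\boldsymbol\alpha^+(s_1)\cdot\boldsymbol\gamma^-(s_2)\ne0$ and $\boldsymbol\alpha^-(s_2)\cdot\boldsymbol\gamma^+(s_1)\ne0$; (II) $(\boldsymbol\alpha^+(s_1)\times(\mathbf r(s_2)-\mathbf r(s_1)))\cdot\boldsymbol\alpha^-(s_2)\ne0$; (III) $(\mathbf r(s_1)-\mathbf r(s_2))\cdot\boldsymbol\gamma^-(s_2)\ne0$ and $(\mathbf r(s_2)-\mathbf r(s_1))\cdot\boldsymbol\gamma^+(s_1)\ne0$; and (IV) for all $t_0\le s_1<s_2<s_3\le t_1$, $\det(\boldsymbol\alpha(s_1),\boldsymbol\alpha(s_2),\boldsymbol\alpha(s_3))\ne0$ (one-sided limits used at $t_0,t_1$). *)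

theory Defs
  imports "HOL-Analysis.Analysis" "HOL-Computational_Algebra.Polynomial"
begin

definition rc :: "(3 \<Rightarrow> real poly) \<Rightarrow> (3 \<Rightarrow> real poly) \<Rightarrow> 3 \<Rightarrow> real \<Rightarrow> real" where
  "rc P Q i t = poly (P i) t / poly (Q i) t"

definition curve :: "(3 \<Rightarrow> real poly) \<Rightarrow> (3 \<Rightarrow> real poly) \<Rightarrow> real \<Rightarrow> real^3" where
  "curve P Q t = (\<chi> i. rc P Q i t)"

definition rder :: "(3 \<Rightarrow> real poly) \<Rightarrow> (3 \<Rightarrow> real poly) \<Rightarrow> nat \<Rightarrow> real \<Rightarrow> real^3" where
  "rder P Q k t = (\<chi> i. (deriv ^^ k) (rc P Q i) t)"

text \<open>Complex evaluation of the rational components (for algebraic notions).\<close>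
definition rcC :: "(3 \<Rightarrow> real poly) \<Rightarrow> (3 \<Rightarrow> real poly) \<Rightarrow> 3 \<Rightarrow> complex \<Rightarrow> complex" where
  "rcC P Q i z = poly (map_poly complex_of_real (P i)) z / poly (map_poly complex_of_real (Q i)) z"

definition defined_at_C :: "(3 \<Rightarrow> real poly) \<Rightarrow> complex \<Rightarrow> bool" where
  "defined_at_C Q z \<longleftrightarrow> (\<forall>i. poly (map_poly complex_of_real (Q i)) z \<noteq> 0)"

definition proper_param :: "(3 \<Rightarrow> real poly) \<Rightarrow> (3 \<Rightarrow> real poly) \<Rightarrow> bool" where
  "proper_param P Q \<longleftrightarrow>
     finite {z. defined_at_C Q z \<and>
                (\<exists>w. w \<noteq> z \<and> defined_at_C Q w \<and> (\<forall>i. rcC P Q i w = rcC P Q i z))}"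

definition nonplanar :: "(3 \<Rightarrow> real poly) \<Rightarrow> (3 \<Rightarrow> real poly) \<Rightarrow> bool" where
  "nonplanar P Q \<longleftrightarrow>
     \<not> (\<exists>n::real^3. \<exists>c. n \<noteq> 0 \<and>
           (\<forall>t. (\<forall>i. poly (Q i) t \<noteq> 0) \<longrightarrow> n \<bullet> curve P Q t = c))"

definition curvature :: "(3 \<Rightarrow> real poly) \<Rightarrow> (3 \<Rightarrow> real poly) \<Rightarrow> real \<Rightarrow> real" where
  "curvature P Q t = norm (cross3 (rder P Q 1 t) (rder P Q 2 t)) / norm (rder P Q 1 t) ^ 3"

text \<open>Torsion vanishes exactly where det(r',r'',r''') = 0.\<close>
definition torsion_zero :: "(3 \<Rightarrow> real poly) \<Rightarrow> (3 \<Rightarrow> real poly) \<Rightarrow> real \<Rightarrow> bool" where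
  "torsion_zero P Q t \<longleftrightarrow>
     det (vector [rder P Q 1 t, rder P Q 2 t, rder P Q 3 t] :: real^3^3) = 0"

text \<open>Singular point: the point r(t) corresponds to more than one parameter counted with
  multiplicity, i.e. another (complex) parameter gives the same point, or t is a
  multiple parameter (r'(t) = 0).\<close>
definition singular_param :: "(3 \<Rightarrow> real poly) \<Rightarrow> (3 \<Rightarrow> real poly) \<Rightarrow> real \<Rightarrow> bool" where
  "singular_param P Q t \<longleftrightarrow>
     (\<exists>w. w \<noteq> complex_of_real t \<and> defined_at_C Q w \<and>
          (\<forall>i. rcC P Q i w = complex_of_real (rc P Q i t)))
     \<or> rder P Q 1 t = 0"

definition character_param :: "(3 \<Rightarrow> real poly) \<Rightarrow> (3 \<Rightarrow> real poly) \<Rightarrow> real \<Rightarrow> bool" where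
  "character_param P Q t \<longleftrightarrow>
     singular_param P Q t \<or> curvature P Q t = 0 \<or> torsion_zero P Q t"

definition utan :: "(3 \<Rightarrow> real poly) \<Rightarrow> (3 \<Rightarrow> real poly) \<Rightarrow> real \<Rightarrow> real^3" where
  "utan P Q t = rder P Q 1 t /\<^sub>R norm (rder P Q 1 t)"

definition ubin :: "(3 \<Rightarrow> real poly) \<Rightarrow> (3 \<Rightarrow> real poly) \<Rightarrow> real \<Rightarrow> real^3" where
  "ubin P Q t = cross3 (rder P Q 1 t) (rder P Q 2 t) /\<^sub>R norm (cross3 (rder P Q 1 t) (rder P Q 2 t))"

definition utan_p :: "(3 \<Rightarrow> real poly) \<Rightarrow> (3 \<Rightarrow> real poly) \<Rightarrow> real \<Rightarrow> real^3" where
  "utan_p P Q s = Lim (at_right s) (utan P Q)"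
definition utan_m :: "(3 \<Rightarrow> real poly) \<Rightarrow> (3 \<Rightarrow> real poly) \<Rightarrow> real \<Rightarrow> real^3" where
  "utan_m P Q s = Lim (at_left s) (utan P Q)"
definition ubin_p :: "(3 \<Rightarrow> real poly) \<Rightarrow> (3 \<Rightarrow> real poly) \<Rightarrow> real \<Rightarrow> real^3" where
  "ubin_p P Q s = Lim (at_right s) (ubin P Q)"
definition ubin_m :: "(3 \<Rightarrow> real poly) \<Rightarrow> (3 \<Rightarrow> real poly) \<Rightarrow> real \<Rightarrow> real^3" where
  "ubin_m P Q s = Lim (at_left s) (ubin P Q)"

definition tline_p :: "(3 \<Rightarrow> real poly) \<Rightarrow> (3 \<Rightarrow> real poly) \<Rightarrow> real \<Rightarrow> (real^3) set" where
  "tline_p P Q s = {curve P Q s + l *\<^sub>R utan_p P Q s | l. True}"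
definition tline_m :: "(3 \<Rightarrow> real poly) \<Rightarrow> (3 \<Rightarrow> real poly) \<Rightarrow> real \<Rightarrow> (real^3) set" where
  "tline_m P Q s = {curve P Q s + l *\<^sub>R utan_m P Q s | l. True}"
definition oplane_p :: "(3 \<Rightarrow> real poly) \<Rightarrow> (3 \<Rightarrow> real poly) \<Rightarrow> real \<Rightarrow> (real^3) set" where
  "oplane_p P Q s = {X. (X - curve P Q s) \<bullet> ubin_p P Q s = 0}"
definition oplane_m :: "(3 \<Rightarrow> real poly) \<Rightarrow> (3 \<Rightarrow> real poly) \<Rightarrow> real \<Rightarrow> (real^3) set" where
  "oplane_m P Q s = {X. (X - curve P Q s) \<bullet> ubin_m P Q s = 0}"

text \<open>Associated tetrahedron of [a,b]: vertices r(a), T+(a) \<inter> L, T-(b) \<inter> L, r(b),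
  where L = O+(a) \<inter> O-(b).\<close>
definition tetL :: "(3 \<Rightarrow> real poly) \<Rightarrow> (3 \<Rightarrow> real poly) \<Rightarrow> real \<Rightarrow> real \<Rightarrow> (real^3) set" where
  "tetL P Q a b = oplane_p P Q a \<inter> oplane_m P Q b"
definition tet0 :: "(3 \<Rightarrow> real poly) \<Rightarrow> (3 \<Rightarrow> real poly) \<Rightarrow> real \<Rightarrow> real \<Rightarrow> real^3" where
  "tet0 P Q a b = curve P Q a"
definition tet1 :: "(3 \<Rightarrow> real poly) \<Rightarrow> (3 \<Rightarrow> real poly) \<Rightarrow> real \<Rightarrow> real \<Rightarrow> real^3" where
  "tet1 P Q a b = (THE X. X \<in> tline_p P Q a \<inter> tetL P Q a b)"
definition tet2 :: "(3 \<Rightarrow> real poly) \<Rightarrow> (3 \<Rightarrow> real poly) \<Rightarrow> real \<Rightarrow> real \<Rightarrow> real^3" where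
  "tet2 P Q a b = (THE X. X \<in> tline_m P Q b \<inter> tetL P Q a b)"
definition tet3 :: "(3 \<Rightarrow> real poly) \<Rightarrow> (3 \<Rightarrow> real poly) \<Rightarrow> real \<Rightarrow> real \<Rightarrow> real^3" where
  "tet3 P Q a b = curve P Q b"

definition admissible :: "(3 \<Rightarrow> real poly) \<Rightarrow> (3 \<Rightarrow> real poly) \<Rightarrow> real \<Rightarrow> real \<Rightarrow> bool" where
  "admissible P Q t0 t1 \<longleftrightarrow>
     t0 < t1 \<and>
     (\<forall>t\<in>{t0<..t1}. \<not> character_param P Q t) \<and>
     (\<forall>s1 s2. t0 \<le> s1 \<and> s1 < s2 \<and> s2 \<le> t1 \<longrightarrow>
        utan_p P Q s1 \<bullet> ubin_m P Q s2 \<noteq> 0 \<and>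
        utan_m P Q s2 \<bullet> ubin_p P Q s1 \<noteq> 0 \<and>
        cross3 (utan_p P Q s1) (curve P Q s2 - curve P Q s1) \<bullet> utan_m P Q s2 \<noteq> 0 \<and>
        (curve P Q s1 - curve P Q s2) \<bullet> ubin_m P Q s2 \<noteq> 0 \<and>
        (curve P Q s2 - curve P Q s1) \<bullet> ubin_p P Q s1 \<noteq> 0) \<and>
     (\<forall>s1 s2 s3. t0 \<le> s1 \<and> s1 < s2 \<and> s2 < s3 \<and> s3 \<le> t1 \<longrightarrow>
        det (vector [utan_p P Q s1, utan P Q s2, utan_m P Q s3] :: real^3^3) \<noteq> 0)"

end

theory Submission
  imports Defs
begin


definition ratat :: "(real \<Rightarrow> real) \<Rightarrow> real \<Rightarrow> bool" where
 "ratat f x \<longleftrightarrow> (\<exists>p q. poly q x \<noteq> 0 \<and> eventually (\<lambda>y. f y = poly p y / poly q y) (nhds x))"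

lemma isCont_nz_nhds:
  assumes "isCont g x" "g x \<noteq> (0::real)" shows "eventually (\<lambda>y. g y \<noteq> 0) (nhds x)"
proof -
  have "eventually (\<lambda>y. g y \<noteq> 0) (at x)" using assms tendsto_imp_eventually_ne by (auto simp: isCont_def)
  hence "eventually (\<lambda>y. y \<noteq> x \<longrightarrow> g y \<noteq> 0) (nhds x)" by (simp add: eventually_at_filter)
  thus ?thesis by eventually_elim (use assms(2) in auto)
qed

lemma ratat_cong:
  assumes "ratat f x" "eventually (\<lambda>y. f y = g y) (nhds x)" shows "ratat g x"
proof -
  obtain p q where pq: "poly q x \<noteq> 0" "eventually (\<lambda>y. f y = poly p y / poly q y) (nhds x)"
    using assms(1) unfolding ratat_def by blast
  have "eventually (\<lambda>y. g y = poly p y / poly q y) (nhds x)"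
    using pq(2) assms(2) by eventually_elim auto
  thus ?thesis using pq(1) unfolding ratat_def by blast
qed

lemma ratat_const: "ratat (\<lambda>y. c) x"
  unfolding ratat_def by (rule exI[of _ "[:c:]"], rule exI[of _ 1]) auto

lemma ratat_add:
  assumes "ratat f x" "ratat g x" shows "ratat (\<lambda>y. f y + g y) x"
proof -
  obtain p q where pq: "poly q x \<noteq> 0" "eventually (\<lambda>y. f y = poly p y / poly q y) (nhds x)"
    using assms(1) unfolding ratat_def by blast
  obtain p' q' where pq': "poly q' x \<noteq> 0" "eventually (\<lambda>y. g y = poly p' y / poly q' y) (nhds x)"
    using assms(2) unfolding ratat_def by blast
  have c: "isCont (\<lambda>y. poly q y * poly q' y) x" by (intro continuous_intros)
  have "eventually (\<lambda>y. poly q y * poly q' y \<noteq> 0) (nhds x)"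
    using isCont_nz_nhds[OF c] pq(1) pq'(1) by simp
  hence "eventually (\<lambda>y. f y + g y = poly (p * q' + p' * q) y / poly (q * q') y) (nhds x)"
    using pq(2) pq'(2) by eventually_elim (simp add: field_simps)
  thus ?thesis using pq(1) pq'(1) unfolding ratat_def by (intro exI[of _ "p * q' + p' * q"] exI[of _ "q*q'"]) auto
qed

lemma ratat_mult:
  assumes "ratat f x" "ratat g x" shows "ratat (\<lambda>y. f y * g y) x"
proof -
  obtain p q where pq: "poly q x \<noteq> 0" "eventually (\<lambda>y. f y = poly p y / poly q y) (nhds x)"
    using assms(1) unfolding ratat_def by blast
  obtain p' q' where pq': "poly q' x \<noteq> 0" "eventually (\<lambda>y. g y = poly p' y / poly q' y) (nhds x)"
    using assms(2) unfolding ratat_def by blast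
  have "eventually (\<lambda>y. f y * g y = poly (p * p') y / poly (q * q') y) (nhds x)"
    using pq(2) pq'(2) by eventually_elim (simp add: field_simps)
  thus ?thesis using pq(1) pq'(1) unfolding ratat_def by (intro exI[of _ "p * p'"] exI[of _ "q*q'"]) auto
qed

lemma ratat_minus:
  assumes "ratat f x" shows "ratat (\<lambda>y. - f y) x"
  using ratat_mult[OF ratat_const[of "-1"] assms] by simp

lemma ratat_diff:
  assumes "ratat f x" "ratat g x" shows "ratat (\<lambda>y. f y - g y) x"
  using ratat_add[OF assms(1) ratat_minus[OF assms(2)]] by simp

lemma ratat_isCont:
  assumes "ratat f x" shows "isCont f x"
proof -
  obtain p q where pq: "poly q x \<noteq> 0" "eventually (\<lambda>y. f y = poly p y / poly q y) (nhds x)"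
    using assms(1) unfolding ratat_def by blast
  have c: "isCont (\<lambda>y. poly p y / poly q y) x" using pq(1) by (intro continuous_intros) auto
  have fx: "f x = poly p x / poly q x" using eventually_nhds_x_imp_x[OF pq(2)] .
  have "((\<lambda>y. poly p y / poly q y) \<longlongrightarrow> f x) (at x)" using c fx by (simp add: isCont_def)
  moreover have "eventually (\<lambda>y. poly p y / poly q y = f y) (at x)"
    using pq(2) by (simp add: eventually_at_filter eventually_mono)
  ultimately show ?thesis unfolding isCont_def using Lim_transform_eventually by blast
qed

lemma ratat_deriv:
  assumes "ratat f x" shows "ratat (deriv f) x"
proof -
  obtain p q where pq: "poly q x \<noteq> 0" "eventually (\<lambda>y. f y = poly p y / poly q y) (nhds x)"
    using assms(1) unfolding ratat_def by blast
  have c: "isCont (\<lambda>y. poly q y) x" by (intro continuous_intros)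
  have nz: "eventually (\<lambda>y. poly q y \<noteq> 0) (nhds x)"
    using isCont_nz_nhds[OF c] pq(1) by simp
  have ee: "eventually (\<lambda>y. eventually (\<lambda>z. f z = poly p z / poly q z) (nhds y)) (nhds x)"
    using pq(2) by (simp add: eventually_eventually)
  have "eventually (\<lambda>y. deriv f y = poly (pderiv p * q - p * pderiv q) y / poly (q * q) y) (nhds x)"
    using ee nz
  proof eventually_elim
    case (elim y)
    have "deriv f y = deriv (\<lambda>z. poly p z / poly q z) y" by (rule deriv_cong_ev[OF elim(1) refl])
    also have "\<dots> = (poly (pderiv p) y * poly q y - poly p y * poly (pderiv q) y) / (poly q y * poly q y)"
      by (rule DERIV_imp_deriv, rule DERIV_divide) (use elim(2) in auto)
    finally show ?case by (simp add: algebra_simps)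
  qed
  thus ?thesis using pq(1) unfolding ratat_def by (intro exI[of _ "pderiv p * q - p * pderiv q"] exI[of _ "q*q"]) auto
qed

lemma ratat_rc: assumes "\<forall>i. poly (Q i) x \<noteq> 0" shows "ratat (rc P Q i) x"
  unfolding ratat_def rc_def using assms by (intro exI[of _ "P i"] exI[of _ "Q i"]) auto

lemma ratat_rder: assumes "\<forall>i. poly (Q i) x \<noteq> 0" shows "ratat (\<lambda>t. rder P Q k t $ i) x"
proof -
  have "ratat ((deriv ^^ k) (rc P Q i)) x"
    by (induction k) (auto intro: ratat_deriv ratat_rc[OF assms])
  thus ?thesis unfolding rder_def by simp
qed

lemma nhds_within: "eventually P (nhds x) \<Longrightarrow> eventually P (at x within s)"
  by (simp add: eventually_at_filter eventually_mono)

lemma inv_cancel: "(a::real) \<noteq> 0 \<Longrightarrow> inverse (a * b) * a = inverse b"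
  by (simp add: inverse_mult_distrib)

lemma norm_limit:
  fixes v :: "real \<Rightarrow> real^3"
  assumes rat: "\<And>i. ratat (\<lambda>t. v t $ i) x0" and x01: "x0 < x1"
    and nz: "\<And>t. x0 < t \<Longrightarrow> t < x1 \<Longrightarrow> v t \<noteq> 0"
  shows "\<exists>L. ((\<lambda>t. v t /\<^sub>R norm (v t)) \<longlongrightarrow> L) (at_right x0)"
proof -
  have "\<forall>i. \<exists>pq. poly (snd pq) x0 \<noteq> 0 \<and> eventually (\<lambda>y. v y $ i = poly (fst pq) y / poly (snd pq) y) (nhds x0)"
    using rat unfolding ratat_def by (metis fst_conv snd_conv)
  then obtain f where f: "\<forall>i. poly (snd (f i)) x0 \<noteq> 0 \<and> eventually (\<lambda>y. v y $ i = poly (fst (f i)) y / poly (snd (f i)) y) (nhds x0)"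
    using choice[of "\<lambda>i pq. poly (snd pq) x0 \<noteq> 0 \<and> eventually (\<lambda>y. v y $ i = poly (fst pq) y / poly (snd pq) y) (nhds x0)"] by blast
  define p where "p i = fst (f i)" for i
  define q where "q i = snd (f i)" for i
  have q0: "\<And>i. poly (q i) x0 \<noteq> 0" using f q_def by auto
  have ev: "eventually (\<lambda>y. \<forall>i. v y $ i = poly (p i) y / poly (q i) y) (nhds x0)"
    by (rule eventually_all_finite) (use f p_def q_def in auto)
  have evr: "eventually (\<lambda>y. \<forall>i. v y $ i = poly (p i) y / poly (q i) y) (at_right x0)"
    using nhds_within[OF ev] .
  have lt: "eventually (\<lambda>y. x0 < y \<and> y < x1) (at_right x0)"
    using x01 by (auto simp: eventually_at_right_field)
  define S where "S = {i. p i \<noteq> 0}"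
  have Sne: "S \<noteq> {}"
  proof
    assume "S = {}"
    hence p0: "\<And>i. p i = 0" by (auto simp: S_def)
    have "eventually (\<lambda>y. False) (at_right x0)"
      using evr lt
    proof eventually_elim
      case (elim y)
      have "v y = 0" using elim(1) p0 by (simp add: vec_eq_iff)
      thus False using nz elim(2) by blast
    qed
    thus False by simp
  qed
  define k where "k = Min (order x0 ` p ` S)"
  have finS: "finite (order x0 ` p ` S)" by simp
  obtain j where jS: "j \<in> S" and jk: "order x0 (p j) = k"
  proof -
    have "Min (order x0 ` p ` S) \<in> order x0 ` p ` S" using Min_in[OF finS] Sne by blast
    then obtain j where "j \<in> S" "Min (order x0 ` p ` S) = order x0 (p j)" by (auto simp del: Min_in)
    thus ?thesis using that unfolding k_def by simp
  qed
  have dv: "[:-x0,1:]^k dvd p i" for i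
  proof (cases "p i = 0")
    case False
    hence "k \<le> order x0 (p i)" unfolding k_def using S_def by (intro Min_le) auto
    hence "[:-x0,1:]^k dvd [:-x0,1:]^order x0 (p i)" by (rule le_imp_power_dvd)
    thus ?thesis using order_1 dvd_trans by blast
  qed auto
  define s where "s i = p i div [:-x0,1:]^k" for i
  have ps: "p i = [:-x0,1:]^k * s i" for i using dv[of i] unfolding s_def by simp
  have polyp: "poly (p i) y = (y - x0)^k * poly (s i) y" for i y
    by (subst ps) (simp add: poly_power)
  define w where "w y = (\<chi> i. poly (s i) y / poly (q i) y)" for y
  have wj: "poly (s j) x0 \<noteq> 0"
  proof
    assume "poly (s j) x0 = 0"
    hence "[:-x0,1:] dvd s j" by (simp add: poly_eq_0_iff_dvd)
    hence "[:-x0,1:]^k * [:-x0,1:] dvd [:-x0,1:]^k * s j" by (rule mult_dvd_mono[OF dvd_refl])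
    hence "[:-x0,1:]^Suc (order x0 (p j)) dvd p j" using jk ps[of j] by (simp add: power_Suc2)
    thus False using order_2 jS S_def by blast
  qed
  have w0: "w x0 \<noteq> 0"
  proof
    assume "w x0 = 0"
    hence "w x0 $ j = 0" by simp
    thus False using wj q0[of j] unfolding w_def by simp
  qed
  have wt: "(w \<longlongrightarrow> w x0) (at_right x0)"
    unfolding w_def by (intro tendsto_intros) (use q0 in auto)
  have lim: "((\<lambda>y. w y /\<^sub>R norm (w y)) \<longlongrightarrow> w x0 /\<^sub>R norm (w x0)) (at_right x0)"
    using wt w0 by (intro tendsto_intros) auto
  have "eventually (\<lambda>y. w y /\<^sub>R norm (w y) = v y /\<^sub>R norm (v y)) (at_right x0)"
    using evr lt
  proof eventually_elim
    case (elim y)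
    have vy: "v y = (y - x0)^k *\<^sub>R w y"
      using elim(1) by (simp add: vec_eq_iff w_def polyp)
    have pos: "(y - x0)^k > 0" using elim(2) by simp
    have nv: "norm (v y) = (y - x0)^k * norm (w y)" using pos by (simp add: vy)
    have c: "inverse ((y - x0)^k * norm (w y)) * (y - x0)^k = inverse (norm (w y))"
      using pos by (intro inv_cancel) linarith
    have "v y /\<^sub>R norm (v y) = inverse ((y - x0)^k * norm (w y)) *\<^sub>R ((y - x0)^k *\<^sub>R w y)"
      by (simp only: nv, simp only: vy)
    also have "\<dots> = w y /\<^sub>R norm (w y)" by (subst scaleR_scaleR, subst c, rule refl)
    finally show ?case by (rule sym)
  qed
  thus ?thesis using Lim_transform_eventually[OF lim] by (intro exI)
qed



lemma isCont_vec:
  fixes f :: "real \<Rightarrow> real^3"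
  assumes "\<And>i. isCont (\<lambda>t. f t $ i) x" shows "isCont f x"
  using assms unfolding isCont_def by (intro vec_tendstoI) auto

lemma ratat_vec_isCont:
  fixes f :: "real \<Rightarrow> real^3"
  assumes "\<And>i. ratat (\<lambda>t. f t $ i) x" shows "isCont f x"
  using assms ratat_isCont isCont_vec by blast

lemma ratat_cross:
  fixes u v :: "real \<Rightarrow> real^3"
  assumes "\<And>i. ratat (\<lambda>t. u t $ i) x" "\<And>i. ratat (\<lambda>t. v t $ i) x"
  shows "ratat (\<lambda>t. cross3 (u t) (v t) $ i) x"
proof -
  have "i = 1 \<or> i = 2 \<or> i = 3" using exhaust_3 by blast
  thus ?thesis
    by (elim disjE) (simp_all add: cross_components ratat_diff ratat_mult assms)
qed

lemma isCont_left:
  fixes f :: "real \<Rightarrow> 'b::t2_space"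
  assumes "isCont f x" shows "Lim (at_left x) f = f x"
proof (rule tendsto_Lim[OF trivial_limit_at_left_real])
  have "(f \<longlongrightarrow> f x) (at x within UNIV)" using assms by (simp add: isCont_def)
  thus "(f \<longlongrightarrow> f x) (at_left x)" by (rule tendsto_within_subset) auto
qed

lemma isCont_normalize:
  fixes v :: "real \<Rightarrow> real^3"
  assumes "isCont v x" "v x \<noteq> 0" shows "isCont (\<lambda>t. v t /\<^sub>R norm (v t)) x"
  using assms unfolding isCont_def by (intro tendsto_intros) auto

lemma same_sign:
  fixes g :: "real \<Rightarrow> real"
  assumes "x \<le> y" "continuous_on {x..y} g" "\<forall>z\<in>{x..y}. g z \<noteq> 0"
  shows "0 < g x * g y"
proof (rule ccontr)
  assume "\<not> 0 < g x * g y"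
  hence "g x \<le> 0 \<and> 0 \<le> g y \<or> g y \<le> 0 \<and> 0 \<le> g x"
    by (smt (verit) zero_less_mult_iff)
  then obtain z where "x \<le> z" "z \<le> y" "g z = 0"
    using IVT'[of g x 0 y] IVT2'[of g y 0 x] assms(1,2) by blast
  thus False using assms(3) by auto
qed

lemma comb_nz:
  fixes p q u :: real
  assumes "0 < p * q" "0 \<le> u" "u \<le> 1" shows "(1 - u) * p + u * q \<noteq> 0"
proof (cases "p > 0")
  case True
  hence "q > 0" using assms(1) by (metis mult_le_0_iff not_le order.strict_iff_order)
  hence "(1 - u) * p \<ge> 0" "u * q \<ge> 0" using True assms by auto
  moreover have "(1 - u) * p > 0 \<or> u * q > 0" using True \<open>q > 0\<close> assms
    by (cases "u = 1") auto
  ultimately show ?thesis by linarith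
next
  case False
  hence "p < 0" using assms(1) by (cases "p = 0") auto
  hence "q < 0" using assms(1) by (metis mult_le_0_iff not_le order.strict_iff_order)
  hence "(1 - u) * p \<le> 0" "u * q \<le> 0" using \<open>p < 0\<close> assms
    by (auto simp: mult_nonneg_nonpos mult_nonpos_nonneg)
  moreover have "(1 - u) * p < 0 \<or> u * q < 0" using \<open>p < 0\<close> \<open>q < 0\<close> assms
    by (cases "u = 1") (auto simp: mult_pos_neg)
  ultimately show ?thesis by linarith
qed

lemma cross_cross_left: "cross3 (cross3 x y) z = (x \<bullet> z) *\<^sub>R y - (y \<bullet> z) *\<^sub>R x"
  for x y z :: "real^3"
  by (simp add: cross3_simps forall_3)

lemma triple_cyc: "(cross3 x y) \<bullet> z = x \<bullet> (cross3 y z)" for x y z :: "real^3"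
  by (simp add: cross3_simps)

lemma key_cross:
  fixes T B Y :: "real^3"
  assumes "T \<bullet> B = 0" "Y \<bullet> B = 0" "Y \<bullet> cross3 B T = 0" "B \<noteq> 0"
  shows "cross3 T Y = 0"
proof -
  let ?c = "cross3 T Y"
  have c1: "cross3 ?c B = 0" using assms(1,2) by (simp add: cross_cross_left)
  have c2: "?c \<bullet> B = 0" using assms(3) triple_cyc
    by (metis inner_commute)
  have "(norm (cross3 ?c B))\<^sup>2 + (?c \<bullet> B)\<^sup>2 = (norm ?c * norm B)\<^sup>2" by (rule norm_cross_dot)
  hence "norm ?c * norm B = 0" using c1 c2 by simp
  thus ?thesis using assms(4) by simp
qed



theorem lemma3:
  fixes P Q :: "3 \<Rightarrow> real poly" and I :: "real set" and t0 t1 ts :: real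
  assumes "is_interval I"
    and "\<forall>t\<in>I. \<forall>i. poly (Q i) t \<noteq> 0"
    and "proper_param P Q"
    and "nonplanar P Q"
    and "{t0..t1} \<subseteq> I"
    and "admissible P Q t0 t1"
    and "t0 < ts" and "ts < t1"
  shows "(tet1 P Q t0 ts \<in> tline_p P Q t0 \<and> tet1 P Q t0 t1 \<in> tline_p P Q t0 \<and>
         tet0 P Q t0 t1 \<notin> closed_segment (tet1 P Q t0 ts) (tet1 P Q t0 t1)) \<and>
         (tet2 P Q t0 ts \<in> oplane_p P Q t0 \<and> tet2 P Q t0 t1 \<in> oplane_p P Q t0 \<and>
         closed_segment (tet2 P Q t0 ts) (tet2 P Q t0 t1) \<inter> tline_p P Q t0 = {})"
proof -
  note adm = assms(6)[unfolded admissible_def]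
  have t01: "t0 < t1" using adm by simp
  have Qnz: "\<forall>i. poly (Q i) t \<noteq> 0" if "t0 \<le> t" "t \<le> t1" for t
    using assms(2,5) that by auto
  have rat_r: "ratat (\<lambda>s. curve P Q s $ i) t" if "t0 \<le> t" "t \<le> t1" for t i
    using ratat_rc[OF Qnz[OF that]] by (simp add: curve_def)
  have rat_d: "ratat (\<lambda>s. rder P Q k s $ i) t" if "t0 \<le> t" "t \<le> t1" for t k i
    using ratat_rder[OF Qnz[OF that]] by blast
  have rat_c: "ratat (\<lambda>s. cross3 (rder P Q 1 s) (rder P Q 2 s) $ i) t" if "t0 \<le> t" "t \<le> t1" for t i
    using ratat_cross[OF rat_d[OF that] rat_d[OF that]] by blast
  have nonchar: "rder P Q 1 b \<noteq> 0 \<and> cross3 (rder P Q 1 b) (rder P Q 2 b) \<noteq> 0"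
    if "t0 < b" "b \<le> t1" for b
  proof -
    have "\<not> character_param P Q b" using adm that by auto
    thus ?thesis unfolding character_param_def singular_param_def curvature_def by auto
  qed
  have cr: "isCont (curve P Q) t" if "t0 \<le> t" "t \<le> t1" for t
    using ratat_vec_isCont[OF rat_r[OF that]] by simp
  have c1: "isCont (rder P Q 1) t" if "t0 \<le> t" "t \<le> t1" for t
    using ratat_vec_isCont[OF rat_d[OF that]] by simp
  have cc: "isCont (\<lambda>s. cross3 (rder P Q 1 s) (rder P Q 2 s)) t" if "t0 \<le> t" "t \<le> t1" for t
    using ratat_vec_isCont[OF rat_c[OF that]] by simp
  have utan_eq: "utan P Q = (\<lambda>t. rder P Q 1 t /\<^sub>R norm (rder P Q 1 t))"
    by (auto simp: utan_def)
  have ubin_eq: "ubin P Q = (\<lambda>t. cross3 (rder P Q 1 t) (rder P Q 2 t) /\<^sub>R norm (cross3 (rder P Q 1 t) (rder P Q 2 t)))"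
    by (auto simp: ubin_def)
  have cu: "isCont (utan P Q) b" if "t0 < b" "b \<le> t1" for b
    unfolding utan_eq using isCont_normalize[OF c1] nonchar that by auto
  have cb: "isCont (ubin P Q) b" if "t0 < b" "b \<le> t1" for b
    unfolding ubin_eq using isCont_normalize[OF cc] nonchar that by auto
  have um: "utan_m P Q b = utan P Q b" if "t0 < b" "b \<le> t1" for b
    unfolding utan_m_def using isCont_left[OF cu[OF that]] .
  have bm: "ubin_m P Q b = ubin P Q b" if "t0 < b" "b \<le> t1" for b
    unfolding ubin_m_def using isCont_left[OF cb[OF that]] .
  have orth: "utan P Q t \<bullet> ubin P Q t = 0" for t
    by (simp add: utan_def ubin_def dot_cross_self)
  define a where "a = curve P Q t0"
  define T where "T = utan_p P Q t0"
  define B where "B = ubin_p P Q t0"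
  obtain LT where LT: "(utan P Q \<longlongrightarrow> LT) (at_right t0)"
    using norm_limit[of "rder P Q 1" t0 t1] rat_d t01 nonchar unfolding utan_eq by fastforce
  obtain LB where LB: "(ubin P Q \<longlongrightarrow> LB) (at_right t0)"
    using norm_limit[of "\<lambda>s. cross3 (rder P Q 1 s) (rder P Q 2 s)" t0 t1] rat_c t01 nonchar
    unfolding ubin_eq by fastforce
  have TLT: "T = LT" unfolding T_def utan_p_def by (rule tendsto_Lim[OF trivial_limit_at_right_real LT])
  have BLB: "B = LB" unfolding B_def ubin_p_def by (rule tendsto_Lim[OF trivial_limit_at_right_real LB])
  have TB: "T \<bullet> B = 0"
  proof -
    have "((\<lambda>t. utan P Q t \<bullet> ubin P Q t) \<longlongrightarrow> T \<bullet> B) (at_right t0)"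
      using LT LB TLT BLB by (intro tendsto_intros) auto
    hence "((\<lambda>t. 0::real) \<longlongrightarrow> T \<bullet> B) (at_right t0)" by (simp add: orth)
    thus ?thesis using tendsto_unique[OF trivial_limit_at_right_real _ tendsto_const] by metis
  qed
  have adm2: "T \<bullet> ubin P Q b \<noteq> 0 \<and> utan P Q b \<bullet> B \<noteq> 0 \<and>
      cross3 T (curve P Q b - a) \<bullet> utan P Q b \<noteq> 0 \<and>
      (a - curve P Q b) \<bullet> ubin P Q b \<noteq> 0 \<and> (curve P Q b - a) \<bullet> B \<noteq> 0"
    if "t0 < b" "b \<le> t1" for b
    using adm that um[OF that] bm[OF that] unfolding T_def B_def a_def
    by (metis order_refl)
  have tl: "tline_p P Q t0 = {a + l *\<^sub>R T | l. True}" by (simp add: tline_p_def a_def T_def)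
  have op: "oplane_p P Q t0 = {X. (X - a) \<bullet> B = 0}" by (simp add: oplane_p_def a_def B_def)
  have om: "oplane_m P Q b = {X. (X - curve P Q b) \<bullet> ubin P Q b = 0}" if "t0 < b" "b \<le> t1" for b
    using bm[OF that] by (simp add: oplane_m_def)
  have tm: "tline_m P Q b = {curve P Q b + l *\<^sub>R utan P Q b | l. True}" if "t0 < b" "b \<le> t1" for b
    using um[OF that] by (simp add: tline_m_def)
  define l where "l b = ((curve P Q b - a) \<bullet> ubin P Q b) / (T \<bullet> ubin P Q b)" for b
  have tet1: "tet1 P Q t0 b = a + l b *\<^sub>R T" if "t0 < b" "b \<le> t1" for b
  proof -
    note bb = that
    have nz: "T \<bullet> ubin P Q b \<noteq> 0" using adm2[OF that] by blast
    have lT: "l b * (T \<bullet> ubin P Q b) = (curve P Q b - a) \<bullet> ubin P Q b"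
      using nz by (simp add: l_def)
    show ?thesis unfolding tet1_def
    proof (rule the_equality)
      show "a + l b *\<^sub>R T \<in> tline_p P Q t0 \<inter> tetL P Q t0 b"
        unfolding tetL_def tl op om[OF that] using TB lT
        by (auto simp: inner_diff_left inner_add_left algebra_simps)
    next
      fix X assume "X \<in> tline_p P Q t0 \<inter> tetL P Q t0 b"
      then obtain m where X: "X = a + m *\<^sub>R T" and
        h: "(a + m *\<^sub>R T - curve P Q b) \<bullet> ubin P Q b = 0"
        unfolding tetL_def tl op om[OF bb] by auto
      have "m * (T \<bullet> ubin P Q b) = (curve P Q b - a) \<bullet> ubin P Q b"
        using h by (simp add: inner_diff_left inner_add_left algebra_simps)
      hence "m = l b" using nz by (simp add: l_def field_simps)
      thus "X = a + l b *\<^sub>R T" using X by simp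
    qed
  qed
  have lnz: "\<forall>z\<in>{ts..t1}. l z \<noteq> 0"
  proof
    fix z assume z: "z \<in> {ts..t1}"
    hence zz: "t0 < z" "z \<le> t1" using assms(7) by auto
    have "(a - curve P Q z) \<bullet> ubin P Q z \<noteq> 0" "T \<bullet> ubin P Q z \<noteq> 0" using adm2[OF zz] by auto
    moreover have "(curve P Q z - a) \<bullet> ubin P Q z = - ((a - curve P Q z) \<bullet> ubin P Q z)"
      by (simp add: inner_diff_left)
    ultimately show "l z \<noteq> 0" by (simp add: l_def)
  qed
  have lcont: "continuous_on {ts..t1} l"
  proof (rule continuous_at_imp_continuous_on, rule ballI)
    fix z assume z: "z \<in> {ts..t1}"
    hence zz: "t0 < z" "z \<le> t1" using assms(7) by auto
    have "T \<bullet> ubin P Q z \<noteq> 0" using adm2[OF zz] by auto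
    thus "isCont l z" unfolding l_def using cr[of z] cb[OF zz] zz
      by (intro continuous_intros) auto
  qed
  have lpos: "0 < l ts * l t1" using same_sign[OF _ lcont lnz] assms(8) by simp
  have Tnz: "T \<noteq> 0" using adm2[OF t01 order_refl] by auto
  have partA: "tet0 P Q t0 t1 \<notin> closed_segment (tet1 P Q t0 ts) (tet1 P Q t0 t1)"
  proof
    assume "tet0 P Q t0 t1 \<in> closed_segment (tet1 P Q t0 ts) (tet1 P Q t0 t1)"
    then obtain u where u: "0 \<le> u" "u \<le> 1"
      and e: "a = (1 - u) *\<^sub>R (a + l ts *\<^sub>R T) + u *\<^sub>R (a + l t1 *\<^sub>R T)"
      unfolding in_segment tet0_def a_def[symmetric]
        tet1[OF assms(7) less_imp_le[OF assms(8)]] tet1[OF t01 order_refl] by blast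
    have "a = a + ((1 - u) * l ts + u * l t1) *\<^sub>R T" using e by (simp add: algebra_simps)
    hence "((1 - u) * l ts + u * l t1) *\<^sub>R T = 0" by simp
    thus False using Tnz comb_nz[OF lpos u] by simp
  qed
  define mu where "mu b = - ((curve P Q b - a) \<bullet> B) / (utan P Q b \<bullet> B)" for b
  have tet2: "tet2 P Q t0 b = curve P Q b + mu b *\<^sub>R utan P Q b" if "t0 < b" "b \<le> t1" for b
  proof -
    note bb = that
    have nz: "utan P Q b \<bullet> B \<noteq> 0" using adm2[OF that] by blast
    have mT: "mu b * (utan P Q b \<bullet> B) = - ((curve P Q b - a) \<bullet> B)"
      using nz by (simp add: mu_def)
    show ?thesis unfolding tet2_def
    proof (rule the_equality)
      show "curve P Q b + mu b *\<^sub>R utan P Q b \<in> tline_m P Q b \<inter> tetL P Q t0 b"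
        unfolding tetL_def tm[OF that] op om[OF that] using orth[of b] mT
        by (auto simp: inner_diff_left inner_add_left algebra_simps)
    next
      fix X assume "X \<in> tline_m P Q b \<inter> tetL P Q t0 b"
      then obtain m where X: "X = curve P Q b + m *\<^sub>R utan P Q b" and
        h: "(curve P Q b + m *\<^sub>R utan P Q b - a) \<bullet> B = 0"
        unfolding tetL_def tm[OF bb] op om[OF bb] by auto
      have "m * (utan P Q b \<bullet> B) = - ((curve P Q b - a) \<bullet> B)"
        using h by (simp add: inner_diff_left inner_add_left algebra_simps)
      hence "m = mu b" using nz by (simp add: mu_def field_simps)
      thus "X = curve P Q b + mu b *\<^sub>R utan P Q b" using X by simp
    qed
  qed
  have inop: "curve P Q b + mu b *\<^sub>R utan P Q b \<in> oplane_p P Q t0" if "t0 < b" "b \<le> t1" for b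
  proof -
    have nz: "utan P Q b \<bullet> B \<noteq> 0" using adm2[OF that] by blast
    have mT: "mu b * (utan P Q b \<bullet> B) = - ((curve P Q b - a) \<bullet> B)"
      using nz by (simp add: mu_def)
    show ?thesis unfolding op using mT by (auto simp: inner_diff_left inner_add_left algebra_simps)
  qed
  have Bnz: "B \<noteq> 0" using adm2[OF t01 order_refl] by auto
  define N where "N = cross3 B T"
  define g where "g b = (curve P Q b + mu b *\<^sub>R utan P Q b - a) \<bullet> N" for b
  have gnz: "\<forall>z\<in>{ts..t1}. g z \<noteq> 0"
  proof
    fix z assume z: "z \<in> {ts..t1}"
    hence zz: "t0 < z" "z \<le> t1" using assms(7) by auto
    define Y where "Y = curve P Q z + mu z *\<^sub>R utan P Q z - a"
    show "g z \<noteq> 0"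
    proof
      assume g0: "g z = 0"
      have YB: "Y \<bullet> B = 0" using inop[OF zz] unfolding op Y_def by simp
      have YN: "Y \<bullet> cross3 B T = 0" using g0 unfolding g_def N_def Y_def .
      have c0: "cross3 T Y = 0" by (rule key_cross[OF TB YB YN Bnz])
      have "curve P Q z - a = Y - mu z *\<^sub>R utan P Q z" unfolding Y_def by simp
      hence "cross3 T (curve P Q z - a) \<bullet> utan P Q z
            = cross3 T Y \<bullet> utan P Q z - mu z * (cross3 T (utan P Q z) \<bullet> utan P Q z)"
        by (simp add: Cross3.right_diff_distrib cross_mult_right inner_diff_left)
      also have "\<dots> = 0" using c0 by (simp add: dot_cross_self)
      finally show False using adm2[OF zz] by blast
    qed
  qed
  have gcont: "continuous_on {ts..t1} g"
  proof (rule continuous_at_imp_continuous_on, rule ballI)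
    fix z assume z: "z \<in> {ts..t1}"
    hence zz: "t0 < z" "z \<le> t1" using assms(7) by auto
    have "utan P Q z \<bullet> B \<noteq> 0" using adm2[OF zz] by auto
    thus "isCont g z" unfolding g_def mu_def using cr[of z] cu[OF zz] zz
      by (intro continuous_intros) auto
  qed
  have gpos: "0 < g ts * g t1" using same_sign[OF _ gcont gnz] assms(8) by simp
  have partB: "closed_segment (tet2 P Q t0 ts) (tet2 P Q t0 t1) \<inter> tline_p P Q t0 = {}"
  proof (rule ccontr)
    assume "closed_segment (tet2 P Q t0 ts) (tet2 P Q t0 t1) \<inter> tline_p P Q t0 \<noteq> {}"
    then obtain Z where Zs: "Z \<in> closed_segment (tet2 P Q t0 ts) (tet2 P Q t0 t1)"
      and Zl: "Z \<in> tline_p P Q t0" by blast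
    obtain m where Zm: "Z = a + m *\<^sub>R T" using Zl unfolding tl by blast
    have z0: "(Z - a) \<bullet> N = 0" unfolding Zm N_def by (simp add: dot_cross_self)
    define X1 where "X1 = curve P Q ts + mu ts *\<^sub>R utan P Q ts"
    define X2 where "X2 = curve P Q t1 + mu t1 *\<^sub>R utan P Q t1"
    obtain u where u: "0 \<le> u" "u \<le> 1" and e: "Z = (1 - u) *\<^sub>R X1 + u *\<^sub>R X2"
      using Zs unfolding in_segment tet2[OF assms(7) less_imp_le[OF assms(8)]] tet2[OF t01 order_refl]
        X1_def[symmetric] X2_def[symmetric] by blast
    have "Z - a = (1 - u) *\<^sub>R (X1 - a) + u *\<^sub>R (X2 - a)" using e by (simp add: algebra_simps)
    hence "(Z - a) \<bullet> N = (1 - u) * g ts + u * g t1"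
      by (simp add: g_def X1_def X2_def inner_add_left)
    thus False using z0 comb_nz[OF gpos u] by simp
  qed
  show ?thesis
    using partA partB tet1[OF assms(7) less_imp_le[OF assms(8)]] tet1[OF t01 order_refl]
      tet2[OF assms(7) less_imp_le[OF assms(8)]] tet2[OF t01 order_refl]
      inop[OF assms(7) less_imp_le[OF assms(8)]] inop[OF t01 order_refl]
    unfolding tl by auto
qed


end
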